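(* Assume the setting and Algorithm 2 described in the context, with $|Q|\ge2$, and suppose $L$ is convex. Take $n_1=\Theta(\frac{M^2}{\varepsilon_1^2}\log|Q|)$ and $n_2=\Theta\big(\frac{M^2}{\varepsilon_1^2\varepsilon_2^2}\log|Q|\log(\frac{M\log|Q|}{\varepsilon_1\varepsilon_2})\big)$, with suitable absolute constants. Then with probability at least $14/15$: if Algorithm 2 outputs a distribution $\mu'_D$ during the outer iteration with value $\ell$, then $\mathrm{Loss}(\mu'_D)\le\ell+\frac{2\varepsilon_1}{3}$.
   Context: Setting. $X$ is a countable set and $p$ is a probability distribution on $X$. For a distribution $q$ on $X$, $q_x$ is the mass of $x$ and $\mathrm{supp}(q)=\{x:q_x>0\}$. An invalidity function $\mathrm{Inv}:X\to\{0,1\}$ is given with $\mathrm{Inv}(x)=0$ for all $x\in\mathrm{supp}(p)$. For a distribution $q$, $\mathrm{Inv}(q)=\mathbb{E}_{x\sim q}[\mathrm{Inv}(x)]$. Fix $M>0$ and a monotone non-increasing function $L:[0,1]\to[0,M]$, and set $\mathrm{Loss}(q)=\mathbb{E}_{x\sim p}[L(q_x)]$. The learner may draw i.i.d. samples from $p$ and may query $\mathrm{Inv}(x)$ at any point. $Q$ is a finite family of probability distributions on $X$. A fixed point $x^*$ with $\mathrm{Inv}(x^* )=0$ is available. Algorithm 2 (parameters $\varepsilon_1,\varepsilon_2,\alpha,n_1,n_2$): (1) Draw $n_1$ i.i.d. samples from $p$. For every $q\in Q$ let $\overline{\mathrm{Loss}}(q)$ be the average of $L(q_x)$ over these samples.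 (2) For $\ell=0,\varepsilon_1/3,2\varepsilon_1/3,\dots$ (the multiples of $\varepsilon_1/3$ in $[0,M]$, in increasing order): (a) Set $D=\{q\in Q:\overline{\mathrm{Loss}}(q)\le\ell\}$. (b) While $D\neq\emptyset$: - Let $\mu_D=\frac1{|D|}\sum_{q\in D}q$. - Let $w_D(x)=\Pr_{q\sim\mathrm{Unif}(D)}[\varepsilon_1 q_x<3M\mu_D(x)]$. - Draw $n_2$ i.i.d. samples $x_1,\dots,x_{n_2}$ from $\mu_D$ and query their invalidity. - If $\frac1{n_2}\sum_{i}\mathrm{Inv}(x_i)w_D(x_i)\le\alpha+\frac{4\varepsilon_2}{5}$, output $\mu'_D$ and stop. Here $\mu'_D$ draws $x\sim\mu_D$, returns $x$ with probability $w_D(x)$, and returns $x^*$ otherwise. - Otherwise, remove from $D$ every $q$ with $\frac1{n_2}\sum_i\mathrm{Inv}(x_i)\frac{q_{x_i}}{\mu_D(x_i)}\mathbb{I}[\varepsilon_1q_{x_i}<3M\mu_D(x_i)]>\alpha+\frac{\varepsilon_2}{5}$. *)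

theory Defs
  imports "HOL-Probability.Probability"
begin

fun iid_samples :: "nat \<Rightarrow> 'a pmf \<Rightarrow> 'a list pmf" where
  "iid_samples 0 d = return_pmf []"
| "iid_samples (Suc n) d = do { x \<leftarrow> d; xs \<leftarrow> iid_samples n d; return_pmf (x # xs) }"

definition avg :: "('a \<Rightarrow> real) \<Rightarrow> 'a list \<Rightarrow> real" where
  "avg f xs = (\<Sum>x\<leftarrow>xs. f x) / real (length xs)"

definition inv01 :: "('a \<Rightarrow> bool) \<Rightarrow> 'a \<Rightarrow> real" where
  "inv01 Inv x = (if Inv x then 1 else 0)"

definition Loss :: "(real \<Rightarrow> real) \<Rightarrow> 'a pmf \<Rightarrow> 'a pmf \<Rightarrow> real" where
  "Loss L p q = measure_pmf.expectation p (\<lambda>x. L (pmf q x))"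

definition mixture :: "'a pmf set \<Rightarrow> 'a pmf" where
  "mixture D = bind_pmf (pmf_of_set D) (\<lambda>q. q)"

definition wD :: "real \<Rightarrow> real \<Rightarrow> 'a pmf set \<Rightarrow> 'a \<Rightarrow> real" where
  "wD eps1 M D x =
     real (card {q \<in> D. eps1 * pmf q x < 3 * M * pmf (mixture D) x}) / real (card D)"

definition mixture' :: "real \<Rightarrow> real \<Rightarrow> 'a \<Rightarrow> 'a pmf set \<Rightarrow> 'a pmf" where
  "mixture' eps1 M xstar D =
     bind_pmf (mixture D)
       (\<lambda>x. map_pmf (\<lambda>b. if b then x else xstar) (bernoulli_pmf (wD eps1 M D x)))"

definition rem_stat :: "real \<Rightarrow> real \<Rightarrow> ('a \<Rightarrow> bool) \<Rightarrow> 'a pmf set \<Rightarrow> 'a list \<Rightarrow> 'a pmf \<Rightarrow> real" where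
  "rem_stat eps1 M Inv D xs q =
     avg (\<lambda>x. inv01 Inv x * (pmf q x / pmf (mixture D) x) *
               (if eps1 * pmf q x < 3 * M * pmf (mixture D) x then 1 else 0)) xs"

text \<open>Inner while-loop (step 2(b)).  Result: Some mu'_D if an output is produced,
  None if D becomes empty.  Possible non-termination is modelled by the spmf monad.\<close>
partial_function (spmf) alg2_inner ::
  "real \<Rightarrow> real \<Rightarrow> real \<Rightarrow> real \<Rightarrow> nat \<Rightarrow> ('a \<Rightarrow> bool) \<Rightarrow> 'a \<Rightarrow>
   'a pmf set \<Rightarrow> 'a pmf option spmf" where
  "alg2_inner eps1 eps2 alpha M n2 Inv xstar D =
     (if D = {} then return_spmf None
      else bind_spmf (spmf_of_pmf (iid_samples n2 (mixture D))) (\<lambda>xs.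
        if avg (\<lambda>x. inv01 Inv x * wD eps1 M D x) xs \<le> alpha + 4 * eps2 / 5
        then return_spmf (Some (mixture' eps1 M xstar D))
        else alg2_inner eps1 eps2 alpha M n2 Inv xstar
               {q \<in> D. \<not> (rem_stat eps1 M Inv D xs q > alpha + eps2 / 5)}))"

partial_function (spmf) alg2_outer ::
  "real \<Rightarrow> real \<Rightarrow> real \<Rightarrow> real \<Rightarrow> nat \<Rightarrow> ('a \<Rightarrow> bool) \<Rightarrow> 'a \<Rightarrow>
   'a pmf set \<Rightarrow> ('a pmf \<Rightarrow> real) \<Rightarrow> nat \<Rightarrow> (real \<times> 'a pmf) option spmf" where
  "alg2_outer eps1 eps2 alpha M n2 Inv xstar Q emp k =
     (let l = real k * eps1 / 3 in
      if l > M then return_spmf None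
      else bind_spmf (alg2_inner eps1 eps2 alpha M n2 Inv xstar {q \<in> Q. emp q \<le> l}) (\<lambda>r.
        case r of
          Some mu \<Rightarrow> return_spmf (Some (l, mu))
        | None \<Rightarrow> alg2_outer eps1 eps2 alpha M n2 Inv xstar Q emp (Suc k)))"

definition alg2 ::
  "real \<Rightarrow> real \<Rightarrow> real \<Rightarrow> nat \<Rightarrow> nat \<Rightarrow> real \<Rightarrow> (real \<Rightarrow> real) \<Rightarrow> 'a pmf \<Rightarrow>
   ('a \<Rightarrow> bool) \<Rightarrow> 'a \<Rightarrow> 'a pmf set \<Rightarrow> (real \<times> 'a pmf) option spmf" where
  "alg2 eps1 eps2 alpha n1 n2 M L p Inv xstar Q =
     bind_spmf (spmf_of_pmf (iid_samples n1 p)) (\<lambda>ys.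
       alg2_outer eps1 eps2 alpha M n2 Inv xstar Q (\<lambda>q. avg (\<lambda>x. L (pmf q x)) ys) 0)"

end

theory Submission
  imports Defs
begin

lemma pmf_mixture:
  assumes "finite D" "D \<noteq> {}"
  shows "pmf (mixture D) x = (\<Sum>q\<in>D. pmf q x) / real (card D)"
  unfolding mixture_def pmf_bind using assms by (simp add: integral_pmf_of_set)

lemma wD_range:
  assumes "finite D" "D \<noteq> {}"
  shows "0 \<le> wD e M D x \<and> wD e M D x \<le> 1"
proof -
  have "card {q \<in> D. e * pmf q x < 3 * M * pmf (mixture D) x} \<le> card D"
    using assms by (intro card_mono) auto
  moreover have "card D > 0" using assms by auto
  ultimately show ?thesis unfolding wD_def by (auto simp: divide_le_eq_1)
qed

lemma wD_markov:
  assumes "finite D" "D \<noteq> {}" "M > 0" "e > 0" "pmf (mixture D) x > 0"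
  shows "wD e M D x \<ge> 1 - e / (3 * M)"
proof -
  define mu where "mu = pmf (mixture D) x"
  define A where "A = {q \<in> D. e * pmf q x < 3 * M * mu}"
  define B where "B = {q \<in> D. \<not> e * pmf q x < 3 * M * mu}"
  have fin: "finite A" "finite B" using assms(1) by (auto simp: A_def B_def)
  have cardAB: "card A + card B = card D"
  proof -
    have "A \<union> B = D" "A \<inter> B = {}" by (auto simp: A_def B_def)
    thus ?thesis using card_Un_disjoint[OF fin] by simp
  qed
  have "real (card B) * (3 * M * mu) = (\<Sum>q\<in>B. 3 * M * mu)" by simp
  also have "\<dots> \<le> (\<Sum>q\<in>B. e * pmf q x)"
    by (intro sum_mono) (auto simp: B_def)
  also have "\<dots> \<le> (\<Sum>q\<in>D. e * pmf q x)"
    using assms(1,4) by (intro sum_mono2) (auto simp: B_def)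
  also have "\<dots> = e * real (card D) * mu"
    using assms(1,2) by (simp add: mu_def pmf_mixture sum_distrib_left[symmetric])
  finally have 1: "real (card B) * (3 * M * mu) \<le> e * real (card D) * mu" .
  have mu: "mu > 0" using assms(5) by (simp add: mu_def)
  have "real (card B) * (3 * M) \<le> e * real (card D)"
    using 1 mu by (smt (verit, ccfv_SIG) mult.commute mult.left_commute mult_le_cancel_left_pos)
  hence 2: "real (card B) / real (card D) \<le> e / (3 * M)"
    using assms(1,2,3) by (simp add: divide_simps card_gt_0_iff mult.commute)
  have cD: "real (card D) > 0" using assms by auto
  have "wD e M D x = real (card A) / real (card D)"
    by (simp add: wD_def A_def mu_def)
  also have "\<dots> = 1 - real (card B) / real (card D)"
    using cD cardAB by (simp add: field_simps flip: of_nat_add)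
  finally show ?thesis using 2 by linarith
qed

lemma pmf_bind_ge:
  "pmf (bind_pmf p f) x \<ge> pmf p y * pmf (f y) x"
proof -
  have int: "integrable (measure_pmf p) (\<lambda>z. pmf (f z) x)"
    by (intro measure_pmf.integrable_const_bound[where B=1]) (auto simp: pmf_le_1)
  have "pmf p y * pmf (f y) x = (\<integral>z. indicator {y} z * pmf (f y) x \<partial>measure_pmf p)"
  proof -
    have "(\<integral>z. indicator {y} z \<partial>measure_pmf p) = pmf p y"
      using Bochner_Integration.integral_indicator[of "measure_pmf p" "{y}"] by (simp add: measure_pmf_single)
    thus ?thesis by (subst integral_mult_left_zero) simp
  qed
  also have "\<dots> \<le> (\<integral>z. pmf (f z) x \<partial>measure_pmf p)"
    by (intro integral_mono int measure_pmf.integrable_const_bound[where B=1])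
       (auto simp: indicator_def pmf_le_1)
  finally show ?thesis by (simp add: pmf_bind)
qed

lemma mixture'_ge:
  assumes "finite D" "D \<noteq> {}"
  shows "pmf (mixture' e M xs D) x \<ge> pmf (mixture D) x * wD e M D x"
proof -
  have w: "0 \<le> wD e M D x" "wD e M D x \<le> 1" using wD_range[OF assms] by auto
  have "wD e M D x = measure (bernoulli_pmf (wD e M D x)) {True}"
    using w by (simp add: measure_pmf_single)
  also have "\<dots> \<le> measure (bernoulli_pmf (wD e M D x)) ((\<lambda>b. if b then x else xs) -` {x})"
    by (intro measure_pmf.finite_measure_mono) auto
  also have "\<dots> = pmf (map_pmf (\<lambda>b. if b then x else xs) (bernoulli_pmf (wD e M D x))) x"
    by (simp add: pmf_map)
  finally have "pmf (mixture D) x * wD e M D x \<le> pmf (mixture D) x * pmf (map_pmf (\<lambda>b. if b then x else xs) (bernoulli_pmf (wD e M D x))) x"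
    by (intro mult_left_mono) auto
  also have "\<dots> \<le> pmf (mixture' e M xs D) x"
    unfolding mixture'_def by (rule pmf_bind_ge)
  finally show ?thesis .
qed

lemma integrable_L:
  fixes L :: "real \<Rightarrow> real"
  assumes "\<forall>t \<in> {0..1}. 0 \<le> L t \<and> L t \<le> M"
  shows "integrable (measure_pmf p) (\<lambda>x. L (pmf q x))"
  by (intro measure_pmf.integrable_const_bound[where B=M]) (use assms in \<open>auto simp: pmf_le_1\<close>)

lemma Loss_bounds:
  fixes L :: "real \<Rightarrow> real"
  assumes "\<forall>t \<in> {0..1}. 0 \<le> L t \<and> L t \<le> M"
  shows "0 \<le> Loss L p q \<and> Loss L p q \<le> M"
proof -
  have "\<And>x. 0 \<le> L (pmf q x) \<and> L (pmf q x) \<le> M" using assms by (auto simp: pmf_le_1)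
  hence "0 \<le> Loss L p q" "Loss L p q \<le> M" unfolding Loss_def
    by (auto intro!: Bochner_Integration.integral_nonneg measure_pmf.integral_le_const integrable_L[OF assms])
  thus ?thesis by simp
qed

lemma loss_mixture:
  assumes "finite D" "D \<noteq> {}"
    and Lb: "\<forall>t \<in> {0..1}. 0 \<le> L t \<and> L t \<le> M"
    and cv: "convex_on {0..1} L"
    and c: "\<forall>q\<in>D. Loss L p q \<le> c"
  shows "Loss L p (mixture D) \<le> c"
proof -
  have pw: "L (pmf (mixture D) x) \<le> (\<Sum>q\<in>D. (1 / real (card D)) * L (pmf q x))" for x
  proof -
    have "pmf (mixture D) x = (\<Sum>q\<in>D. (1 / real (card D)) *\<^sub>R pmf q x)"
      using assms(1,2) by (simp add: pmf_mixture sum_divide_distrib)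
    moreover have "L (\<Sum>q\<in>D. (1 / real (card D)) *\<^sub>R pmf q x) \<le> (\<Sum>q\<in>D. (1 / real (card D)) * L (pmf q x))"
      using assms(1,2) by (intro convex_on_sum[OF _ _ cv]) (auto simp: pmf_le_1)
    ultimately show ?thesis by simp
  qed
  have "Loss L p (mixture D) \<le> (\<integral>x. (\<Sum>q\<in>D. (1 / real (card D)) * L (pmf q x)) \<partial>measure_pmf p)"
    unfolding Loss_def by (intro integral_mono pw integrable_L[OF Lb] Bochner_Integration.integrable_sum
       integrable_mult_right)
  also have "\<dots> = (\<Sum>q\<in>D. (1 / real (card D)) * Loss L p q)"
    unfolding Loss_def by (subst Bochner_Integration.integral_sum) (auto intro: integrable_L[OF Lb])
  also have "\<dots> \<le> (\<Sum>q\<in>D. (1 / real (card D)) * c)"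
    using c by (intro sum_mono mult_left_mono) auto
  also have "\<dots> = c" using assms(1,2) by simp
  finally show ?thesis .
qed

lemma loss_mixture':
  assumes fin: "finite D" "D \<noteq> {}" and M: "M > 0" and e: "e > 0"
    and Lb: "\<forall>t \<in> {0..1}. 0 \<le> L t \<and> L t \<le> M"
    and mono: "\<forall>s \<in> {0..1}. \<forall>t \<in> {0..1}. s \<le> t \<longrightarrow> L t \<le> L s"
    and cv: "convex_on {0..1} L"
    and c: "\<forall>q\<in>D. Loss L p q \<le> c"
  shows "Loss L p (mixture' e M xs D) \<le> c + e / 3"
proof (cases "e / (3 * M) > 1")
  case True
  obtain q where "q \<in> D" using fin by auto
  hence "0 \<le> c" using c Loss_bounds[OF Lb, of p q] by auto
  moreover have "Loss L p (mixture' e M xs D) \<le> M" using Loss_bounds[OF Lb] by auto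
  moreover have "M < e / 3" using True M by (simp add: field_simps)
  ultimately show ?thesis by linarith
next
  case False
  define d where "d = e / (3 * M)"
  have d: "0 \<le> d" "d \<le> 1" using False M e by (auto simp: d_def)
  have pw: "L (pmf (mixture' e M xs D) x) \<le> L (pmf (mixture D) x) + d * M" for x
  proof -
    define mu where "mu = pmf (mixture D) x"
    have mu: "0 \<le> mu" "mu \<le> 1" by (auto simp: mu_def pmf_le_1)
    have ge: "pmf (mixture' e M xs D) x \<ge> (1 - d) * mu"
    proof (cases "mu > 0")
      case True
      have "(1 - d) * mu \<le> wD e M D x * mu"
        using wD_markov[OF fin M e True[unfolded mu_def]] mu by (intro mult_right_mono) (auto simp: d_def)
      also have "\<dots> \<le> pmf (mixture' e M xs D) x" using mixture'_ge[OF fin, where e=e and M=M and xs=xs and x=x]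
        by (simp add: mu_def mult.commute)
      finally show ?thesis .
    next
      case False
      hence "mu = 0" using mu by auto
      thus ?thesis by simp
    qed
    have in01: "(1 - d) * mu \<in> {0..1}" using d mu by (auto intro: mult_le_one)
    have "L (pmf (mixture' e M xs D) x) \<le> L ((1 - d) * mu)"
      using mono in01 ge by (auto simp: pmf_le_1)
    also have "\<dots> = L ((1 - d) *\<^sub>R mu + d *\<^sub>R 0)" by simp
    also have "\<dots> \<le> (1 - d) * L mu + d * L 0"
      by (rule convex_onD[OF cv]) (use d mu in auto)
    also have "\<dots> \<le> L mu + d * M"
    proof -
      have "0 \<le> L mu" "L 0 \<le> M" using Lb mu by auto
      hence "d * L 0 \<le> d * M" "0 \<le> d * L mu" using d by (auto intro: mult_left_mono)
      thus ?thesis by (simp add: algebra_simps)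
    qed
    finally show ?thesis by (simp add: mu_def)
  qed
  have "Loss L p (mixture' e M xs D) \<le> (\<integral>x. L (pmf (mixture D) x) + d * M \<partial>measure_pmf p)"
    unfolding Loss_def by (intro integral_mono pw integrable_L[OF Lb] Bochner_Integration.integrable_add) auto
  also have "\<dots> = Loss L p (mixture D) + d * M"
    unfolding Loss_def by (subst Bochner_Integration.integral_add) (auto intro: integrable_L[OF Lb])
  also have "d * M = e / 3" using M by (simp add: d_def)
  finally show ?thesis using loss_mixture[OF fin Lb cv c] by linarith
qed

lemma set_spmf_bind_pmf_sub:
  "(\<And>x. set_spmf (F x) \<subseteq> G) \<Longrightarrow> set_spmf (bind_pmf P F) \<subseteq> G"
  by (auto simp: set_spmf_bind_pmf; blast)

lemma inner_good:
  fixes L :: "real \<Rightarrow> real"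
  assumes finS: "finite S" and M: "M > 0" and e: "e > 0"
    and Lb: "\<forall>t \<in> {0..1}. 0 \<le> L t \<and> L t \<le> M"
    and mono: "\<forall>s \<in> {0..1}. \<forall>t \<in> {0..1}. s \<le> t \<longrightarrow> L t \<le> L s"
    and cv: "convex_on {0..1} L"
    and c: "\<forall>q\<in>S. Loss L p q \<le> l + e / 3"
  shows "\<forall>D. D \<subseteq> S \<longrightarrow> set_spmf (alg2_inner e eps2 alpha M n2 Inv xs D) \<subseteq> insert None (Some ` {mu. Loss L p mu \<le> l + 2 * e / 3})"
proof (rule alg2_inner.fixp_induct[where P="\<lambda>f. \<forall>D. D \<subseteq> S \<longrightarrow> set_spmf (f e eps2 alpha M n2 Inv xs D) \<subseteq> insert None (Some ` {mu. Loss L p mu \<le> l + 2 * e / 3})"])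
  show "spmf.admissible (\<lambda>g. \<forall>D. D \<subseteq> S \<longrightarrow> set_spmf (curry (curry (curry (curry (curry (curry (curry g)))))) e eps2 alpha M n2 Inv xs D) \<subseteq> insert None (Some ` {mu. Loss L p mu \<le> l + 2 * e / 3}))"
    by (intro admissible_all admissible_imp cont_intro) simp_all
  show "\<forall>D. D \<subseteq> S \<longrightarrow> set_spmf ((\<lambda>alg2_inner eps1 eps2 alpha M n2 Inv xstar. return_pmf None) e eps2 alpha M n2 Inv xs D) \<subseteq> insert None (Some ` {mu. Loss L p mu \<le> l + 2 * e / 3})"
    by simp
next
  fix f
  assume IH: "\<forall>D. D \<subseteq> S \<longrightarrow> set_spmf (f e eps2 alpha M n2 Inv xs D) \<subseteq> insert None (Some ` {mu. Loss L p mu \<le> l + 2 * e / 3})"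
  show "\<forall>D. D \<subseteq> S \<longrightarrow> set_spmf ((\<lambda>a b c d e f' g h.
            if h = {} then return_spmf None
            else spmf_of_pmf (iid_samples e (mixture h)) \<bind>
                 (\<lambda>xs. if avg (\<lambda>x. inv01 f' x * wD a d h x) xs
                          \<le> c + 4 * b / 5
                       then return_spmf (Some (mixture' a d g h))
                       else f a b c d e f' g
                             {q \<in> h. \<not> c + b / 5 < rem_stat a d f' h xs q})) e eps2 alpha M n2 Inv xs D) \<subseteq> insert None (Some ` {mu. Loss L p mu \<le> l + 2 * e / 3})"
  proof (intro allI impI)
    fix D assume D: "D \<subseteq> S"
    show "set_spmf ((\<lambda>a b c d e f' g h.
            if h = {} then return_spmf None
            else spmf_of_pmf (iid_samples e (mixture h)) \<bind>
                 (\<lambda>xs. if avg (\<lambda>x. inv01 f' x * wD a d h x) xs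
                          \<le> c + 4 * b / 5
                       then return_spmf (Some (mixture' a d g h))
                       else f a b c d e f' g
                             {q \<in> h. \<not> c + b / 5 < rem_stat a d f' h xs q})) e eps2 alpha M n2 Inv xs D) \<subseteq> insert None (Some ` {mu. Loss L p mu \<le> l + 2 * e / 3})"
    proof (cases "D = {}")
      case True thus ?thesis by simp
    next
      case False
      have fD: "finite D" using D finS finite_subset by blast
      have good: "Loss L p (mixture' e M xs D) \<le> l + e / 3 + e / 3"
        by (rule loss_mixture'[OF fD False M e Lb mono cv]) (use c D in auto)
      have sub: "{q \<in> D. P q} \<subseteq> S" for P using D by auto
      have IH': "set_spmf (f e eps2 alpha M n2 Inv xs {q \<in> D. P q}) \<subseteq> insert None (Some ` {mu. Loss L p mu \<le> l + 2 * e / 3})" for P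
        using IH sub by blast
      have G: "set_spmf (if avg (\<lambda>x. inv01 Inv x * wD e M D x) xsa \<le> alpha + 4 * eps2 / 5
                   then return_spmf (Some (mixture' e M xs D))
                   else f e eps2 alpha M n2 Inv xs
                         {q \<in> D. \<not> alpha + eps2 / 5 < rem_stat e M Inv D xsa q})
          \<subseteq> insert None (Some ` {mu. Loss L p mu \<le> l + 2 * e / 3})" for xsa
        using good IH' by auto
      have "set_spmf (spmf_of_pmf (iid_samples n2 (mixture D)) \<bind> (\<lambda>xsa. if avg (\<lambda>x. inv01 Inv x * wD e M D x) xsa \<le> alpha + 4 * eps2 / 5
                   then return_spmf (Some (mixture' e M xs D))
                   else f e eps2 alpha M n2 Inv xs
                         {q \<in> D. \<not> alpha + eps2 / 5 < rem_stat e M Inv D xsa q}))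
          \<subseteq> insert None (Some ` {mu. Loss L p mu \<le> l + 2 * e / 3})"
        unfolding bind_spmf_of_pmf by (rule set_spmf_bind_pmf_sub) (rule G)
      thus ?thesis using False by simp
    qed
  qed
qed

lemma set_spmf_bind_sub:
  "set_spmf p \<subseteq> A \<Longrightarrow> (\<And>x. x \<in> A \<Longrightarrow> set_spmf (F x) \<subseteq> G) \<Longrightarrow> set_spmf (bind_spmf p F) \<subseteq> G"
  by (auto simp: set_bind_spmf; blast)

lemma outer_good:
  fixes L :: "real \<Rightarrow> real"
  assumes finQ: "finite Q" and M: "M > 0" and e: "e > 0"
    and Lb: "\<forall>t \<in> {0..1}. 0 \<le> L t \<and> L t \<le> M"
    and mono: "\<forall>s \<in> {0..1}. \<forall>t \<in> {0..1}. s \<le> t \<longrightarrow> L t \<le> L s"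
    and cv: "convex_on {0..1} L"
    and c: "\<forall>q\<in>Q. Loss L p q \<le> emp q + e / 3"
  shows "\<forall>k. set_spmf (alg2_outer e eps2 alpha M n2 Inv xs Q emp k) \<subseteq> insert None (Some ` {(l, mu). Loss L p mu \<le> l + 2 * e / 3})"
proof (rule alg2_outer.fixp_induct[where P="\<lambda>f. \<forall>k. set_spmf (f e eps2 alpha M n2 Inv xs Q emp k) \<subseteq> insert None (Some ` {(l, mu). Loss L p mu \<le> l + 2 * e / 3})"])
  show "spmf.admissible (\<lambda>g. \<forall>k. set_spmf (curry (curry (curry (curry (curry (curry (curry (curry (curry g))))))))  e eps2 alpha M n2 Inv xs Q emp k) \<subseteq> insert None (Some ` {(l, mu). Loss L p mu \<le> l + 2 * e / 3}))"
    by (intro admissible_all admissible_imp cont_intro) simp_all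
  show "\<forall>k. set_spmf ((\<lambda>alg2_outer eps1 eps2 alpha M n2 Inv xstar Q emp. return_pmf None) e eps2 alpha M n2 Inv xs Q emp k) \<subseteq> insert None (Some ` {(l, mu). Loss L p mu \<le> l + 2 * e / 3})"
    by simp
next
  fix f :: "real \<Rightarrow> real \<Rightarrow> real \<Rightarrow> real \<Rightarrow> nat \<Rightarrow> ('a \<Rightarrow> bool) \<Rightarrow> 'a \<Rightarrow> 'a pmf set \<Rightarrow> ('a pmf \<Rightarrow> real) \<Rightarrow> nat \<Rightarrow> (real \<times> 'a pmf) option spmf"
  assume IH: "\<forall>k. set_spmf (f e eps2 alpha M n2 Inv xs Q emp k) \<subseteq> insert None (Some ` {(l, mu). Loss L p mu \<le> l + 2 * e / 3})"
  show "\<forall>k. set_spmf ((\<lambda>a aa b c d e f' g h i.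
            let l = real i * a / 3
            in if c < l then return_spmf None
               else alg2_inner a aa b c d e f' {q \<in> g. h q \<le> l} \<bind>
                    (\<lambda>r. case r of None \<Rightarrow> f a aa b c d e f' g h (Suc i)
                         | Some mu \<Rightarrow> return_spmf (Some (l, mu)))) e eps2 alpha M n2 Inv xs Q emp k) \<subseteq> insert None (Some ` {(l, mu). Loss L p mu \<le> l + 2 * e / 3})"
  proof
    fix k
    define l where "l = real k * e / 3"
    have S: "\<forall>D. D \<subseteq> {q \<in> Q. emp q \<le> l} \<longrightarrow> set_spmf (alg2_inner e eps2 alpha M n2 Inv xs D) \<subseteq> insert None (Some ` {mu. Loss L p mu \<le> l + 2 * e / 3})"
      by (rule inner_good[OF _ M e Lb mono cv]) (use finQ c in auto)
    have "set_spmf (alg2_inner e eps2 alpha M n2 Inv xs {q \<in> Q. emp q \<le> l} \<bind>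
                    (\<lambda>r. case r of None \<Rightarrow> f e eps2 alpha M n2 Inv xs Q emp (Suc k)
                         | Some mu \<Rightarrow> return_spmf (Some (l, mu)))) \<subseteq> insert None (Some ` {(l, mu). Loss L p mu \<le> l + 2 * e / 3})"
      by (rule set_spmf_bind_sub[OF S[rule_format, OF order_refl]]) (use IH in \<open>auto; blast\<close>)
    thus "set_spmf ((\<lambda>a aa b c d e f' g h i.
            let l = real i * a / 3
            in if c < l then return_spmf None
               else alg2_inner a aa b c d e f' {q \<in> g. h q \<le> l} \<bind>
                    (\<lambda>r. case r of None \<Rightarrow> f a aa b c d e f' g h (Suc i)
                         | Some mu \<Rightarrow> return_spmf (Some (l, mu)))) e eps2 alpha M n2 Inv xs Q emp k) \<subseteq> insert None (Some ` {(l, mu). Loss L p mu \<le> l + 2 * e / 3})"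
      unfolding Let_def l_def[symmetric] by simp
  qed
qed

lemma iid_set:
  "xs \<in> set_pmf (iid_samples n d) \<Longrightarrow> length xs = n \<and> set xs \<subseteq> set_pmf d"
  by (induction n arbitrary: xs) (simp, fastforce)

lemma hoeffding_pmf:
  fixes f :: "'a \<Rightarrow> real"
  assumes "\<forall>x\<in>set_pmf d. f x \<in> {a..b}" "l > 0"
  shows "(\<integral>\<^sup>+x. ennreal (exp (l * (f x - measure_pmf.expectation d f))) \<partial>measure_pmf d) \<le> ennreal (exp (l\<^sup>2 * (b - a)\<^sup>2 / 8))"
proof -
  interpret interval_bounded_random_variable "measure_pmf d" f a b
    by unfold_locales (use assms in \<open>auto simp: AE_measure_pmf_iff\<close>)
  show ?thesis by (rule Hoeffdings_lemma_nn_integral[OF assms(2)])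
qed

lemma mgf_iid:
  fixes f :: "'a \<Rightarrow> real"
  assumes "\<forall>x\<in>set_pmf d. f x \<in> {a..b}" "l > 0"
  shows "(\<integral>\<^sup>+xs. ennreal (exp (l * (\<Sum>x\<leftarrow>xs. f x - measure_pmf.expectation d f))) \<partial>measure_pmf (iid_samples n d))
     \<le> ennreal (exp (l\<^sup>2 * (b - a)\<^sup>2 / 8)) ^ n"
proof (induction n)
  case 0
  show ?case by simp
next
  case (Suc n)
  define mu where "mu = measure_pmf.expectation d f"
  define K where "K = ennreal (exp (l\<^sup>2 * (b - a)\<^sup>2 / 8))"
  have IH: "(\<integral>\<^sup>+xs. ennreal (exp (l * (\<Sum>x\<leftarrow>xs. f x - mu))) \<partial>measure_pmf (iid_samples n d)) \<le> K ^ n"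
    using Suc by (simp add: mu_def K_def)
  have "(\<integral>\<^sup>+xs. ennreal (exp (l * (\<Sum>x\<leftarrow>xs. f x - mu))) \<partial>measure_pmf (iid_samples (Suc n) d))
      = (\<integral>\<^sup>+x. (\<integral>\<^sup>+xs. ennreal (exp (l * (f x - mu))) * ennreal (exp (l * (\<Sum>x\<leftarrow>xs. f x - mu))) \<partial>measure_pmf (iid_samples n d)) \<partial>measure_pmf d)"
    by (simp add: distrib_left exp_add ennreal_mult)
  also have "\<dots> = (\<integral>\<^sup>+x. ennreal (exp (l * (f x - mu))) * (\<integral>\<^sup>+xs. ennreal (exp (l * (\<Sum>x\<leftarrow>xs. f x - mu))) \<partial>measure_pmf (iid_samples n d)) \<partial>measure_pmf d)"
    by (subst nn_integral_cmult) auto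
  also have "\<dots> \<le> (\<integral>\<^sup>+x. ennreal (exp (l * (f x - mu))) * K ^ n \<partial>measure_pmf d)"
    by (intro nn_integral_mono mult_left_mono IH) auto
  also have "\<dots> = (\<integral>\<^sup>+x. ennreal (exp (l * (f x - mu))) \<partial>measure_pmf d) * K ^ n"
    by (subst nn_integral_multc) auto
  also have "\<dots> \<le> K * K ^ n"
    using hoeffding_pmf[OF assms] by (intro mult_right_mono) (auto simp: mu_def K_def)
  finally show ?case by (simp add: mu_def K_def)
qed

lemma chernoff_iid:
  fixes f :: "'a \<Rightarrow> real"
  assumes "\<forall>x\<in>set_pmf d. f x \<in> {a..b}" "l > 0"
  shows "measure (measure_pmf (iid_samples n d)) {xs. s \<le> (\<Sum>x\<leftarrow>xs. f x - measure_pmf.expectation d f)}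
     \<le> exp (- l * s) * exp (l\<^sup>2 * (b - a)\<^sup>2 / 8) ^ n"
proof -
  define mu where "mu = measure_pmf.expectation d f"
  define A where "A = {xs. s \<le> (\<Sum>x\<leftarrow>xs. f x - mu)}"
  have "emeasure (measure_pmf (iid_samples n d)) A = (\<integral>\<^sup>+xs. indicator A xs \<partial>measure_pmf (iid_samples n d))"
    by simp
  also have "\<dots> \<le> (\<integral>\<^sup>+xs. ennreal (exp (- l * s)) * ennreal (exp (l * (\<Sum>x\<leftarrow>xs. f x - mu))) \<partial>measure_pmf (iid_samples n d))"
  proof (intro nn_integral_mono)
    fix xs
    show "indicator A xs \<le> ennreal (exp (- l * s)) * ennreal (exp (l * (\<Sum>x\<leftarrow>xs. f x - mu)))"
    proof (cases "xs \<in> A")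
      case True
      hence "l * s \<le> l * (\<Sum>x\<leftarrow>xs. f x - mu)" using assms(2) by (auto simp: A_def)
      hence "1 \<le> exp (- l * s) * exp (l * (\<Sum>x\<leftarrow>xs. f x - mu))"
        by (simp add: exp_add[symmetric])
      hence "ennreal 1 \<le> ennreal (exp (- l * s) * exp (l * (\<Sum>x\<leftarrow>xs. f x - mu)))"
        using ennreal_leI by blast
      thus ?thesis using True by (simp add: ennreal_mult)
    qed simp
  qed
  also have "\<dots> = ennreal (exp (- l * s)) * (\<integral>\<^sup>+xs. ennreal (exp (l * (\<Sum>x\<leftarrow>xs. f x - mu))) \<partial>measure_pmf (iid_samples n d))"
    by (subst nn_integral_cmult) auto
  also have "\<dots> \<le> ennreal (exp (- l * s)) * ennreal (exp (l\<^sup>2 * (b - a)\<^sup>2 / 8)) ^ n"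
    using mgf_iid[OF assms, of n] by (intro mult_left_mono) (auto simp: mu_def)
  also have "\<dots> = ennreal (exp (- l * s) * exp (l\<^sup>2 * (b - a)\<^sup>2 / 8) ^ n)"
    by (simp add: ennreal_mult ennreal_power)
  finally have "ennreal (measure (measure_pmf (iid_samples n d)) A) \<le> ennreal (exp (- l * s) * exp (l\<^sup>2 * (b - a)\<^sup>2 / 8) ^ n)"
    by (simp add: measure_pmf.emeasure_eq_measure)
  thus ?thesis by (simp add: A_def mu_def)
qed

lemma bad_q:
  fixes g :: "'a \<Rightarrow> real"
  assumes n: "n > 0" and M: "M > 0" and t: "t > 0" and g: "\<forall>x. 0 \<le> g x \<and> g x \<le> M"
  shows "measure (measure_pmf (iid_samples n p)) {ys. measure_pmf.expectation p g > avg g ys + t}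
           \<le> exp (- 2 * real n * t\<^sup>2 / M\<^sup>2)"
proof -
  define Eg where "Eg = measure_pmf.expectation p g"
  define f where "f = (\<lambda>x. - g x)"
  have mf: "measure_pmf.expectation p f = - Eg" by (simp add: f_def Eg_def)
  define l where "l = 4 * t / M\<^sup>2"
  have l: "l > 0" using t M by (simp add: l_def)
  define A where "A = {ys. Eg > avg g ys + t}"
  define B where "B = {ys. real n * t \<le> (\<Sum>x\<leftarrow>ys. f x - measure_pmf.expectation p f)}"
  have AB: "A \<inter> set_pmf (iid_samples n p) \<subseteq> B"
  proof
    fix ys assume ys: "ys \<in> A \<inter> set_pmf (iid_samples n p)"
    hence len: "length ys = n" using iid_set by blast
    have "Eg > (\<Sum>x\<leftarrow>ys. g x) / real n + t" using ys len by (simp add: A_def avg_def)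
    hence "real n * Eg > (\<Sum>x\<leftarrow>ys. g x) + real n * t" using n by (simp add: field_simps)
    moreover have "(\<Sum>x\<leftarrow>ys. f x - measure_pmf.expectation p f) = real n * Eg - (\<Sum>x\<leftarrow>ys. g x)"
      unfolding mf f_def using len by (simp add: sum_list_subtractf sum_list_triv Eg_def)
    ultimately show "ys \<in> B" by (simp add: B_def)
  qed
  have "measure (measure_pmf (iid_samples n p)) A = measure (measure_pmf (iid_samples n p)) (A \<inter> set_pmf (iid_samples n p))"
    by (simp add: measure_Int_set_pmf)
  also have "\<dots> \<le> measure (measure_pmf (iid_samples n p)) B"
    by (intro measure_pmf.finite_measure_mono AB) auto
  also have "\<dots> \<le> exp (- l * (real n * t)) * exp (l\<^sup>2 * (0 - (- M))\<^sup>2 / 8) ^ n"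
    unfolding B_def by (rule chernoff_iid) (use g l in \<open>auto simp: f_def\<close>)
  also have "\<dots> = exp (real n * (- l * t + l\<^sup>2 * M\<^sup>2 / 8))"
    by (simp add: exp_of_nat_mult[symmetric] exp_add[symmetric] algebra_simps)
  also have "- l * t + l\<^sup>2 * M\<^sup>2 / 8 = - 2 * t\<^sup>2 / M\<^sup>2"
    using M by (simp add: l_def field_simps power2_eq_square)
  finally show ?thesis by (simp add: A_def Eg_def mult.commute mult.left_commute)
qed

lemma bind_bad:
  assumes "\<And>ys. ys \<in> set_pmf P \<Longrightarrow> \<not> B ys \<Longrightarrow> set_spmf (F ys) \<inter> A = {}"
  shows "measure (measure_spmf (bind_pmf P F)) A \<le> measure (measure_pmf P) {ys. B ys}"
proof -
  have "emeasure (measure_pmf (bind_pmf P F)) (Some ` A) = (\<integral>\<^sup>+ys. emeasure (measure_pmf (F ys)) (Some ` A) \<partial>measure_pmf P)"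
    by simp
  also have "\<dots> \<le> (\<integral>\<^sup>+ys. indicator {ys. B ys} ys \<partial>measure_pmf P)"
  proof (intro nn_integral_mono_AE, unfold AE_measure_pmf_iff, intro ballI)
    fix ys assume ys: "ys \<in> set_pmf P"
    show "emeasure (measure_pmf (F ys)) (Some ` A) \<le> indicator {ys. B ys} ys"
    proof (cases "B ys")
      case True
      thus ?thesis by (simp add: measure_pmf.emeasure_le_1)
    next
      case False
      have "Some ` A \<inter> set_pmf (F ys) = {}"
        using assms[OF ys False] by (auto simp: in_set_spmf)
      hence "emeasure (measure_pmf (F ys)) (Some ` A) = 0"
        by (metis emeasure_Int_set_pmf emeasure_empty)
      thus ?thesis by simp
    qed
  qed
  also have "\<dots> = emeasure (measure_pmf P) {ys. B ys}" by simp
  finally have "ennreal (measure (measure_pmf (bind_pmf P F)) (Some ` A)) \<le> ennreal (measure (measure_pmf P) {ys. B ys})"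
    by (simp add: measure_pmf.emeasure_eq_measure)
  thus ?thesis by (simp add: measure_measure_spmf_conv_measure_pmf)
qed

lemma final_arith:
  fixes c n e M :: real
  assumes c: "c \<ge> 2" and M: "M > 0" and e: "e > 0"
    and n: "n \<ge> 45 / 2 * M\<^sup>2 / e\<^sup>2 * ln c"
  shows "c * exp (- 2 * n * (e / 3)\<^sup>2 / M\<^sup>2) \<le> 1 / 15"
proof -
  have lnc: "ln c > 0" using c by simp
  have "2 * n * (e / 3)\<^sup>2 / M\<^sup>2 = n * (2 * e\<^sup>2 / (9 * M\<^sup>2))" by (simp add: field_simps power2_eq_square)
  also have "\<dots> \<ge> (45 / 2 * M\<^sup>2 / e\<^sup>2 * ln c) * (2 * e\<^sup>2 / (9 * M\<^sup>2))"
    using n M e by (intro mult_right_mono) auto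
  also have "(45 / 2 * M\<^sup>2 / e\<^sup>2 * ln c) * (2 * e\<^sup>2 / (9 * M\<^sup>2)) = real 5 * ln c"
    using M e by (simp add: field_simps)
  finally have "exp (- 2 * n * (e / 3)\<^sup>2 / M\<^sup>2) \<le> exp (- (real 5 * ln c))" by simp
  also have "exp (- (real 5 * ln c)) = 1 / c ^ 5"
  proof -
    have "exp (real 5 * ln c) = c ^ 5" by (subst exp_of_nat_mult) (use c in simp)
    thus ?thesis by (simp add: exp_minus inverse_eq_divide)
  qed
  finally have "c * exp (- 2 * n * (e / 3)\<^sup>2 / M\<^sup>2) \<le> c * (1 / c ^ 5)"
    using c by (intro mult_left_mono) auto
  also have "c * (1 / c ^ 5) = 1 / c ^ 4" using c by (simp add: field_simps eval_nat_numeral)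
  also have "\<dots> \<le> 1 / 2 ^ 4" using c by (intro divide_left_mono power_mono) auto
  finally show ?thesis by simp
qed

theorem lemma5:
  "\<exists>C1>0. \<exists>C2>0.
    \<forall>(p :: ('a :: countable) pmf) (Q :: 'a pmf set) (Inv :: 'a \<Rightarrow> bool) (xstar :: 'a)
      (M :: real) (L :: real \<Rightarrow> real) (eps1 :: real) (eps2 :: real) (alpha :: real)
      (n1 :: nat) (n2 :: nat).
      finite Q \<and> card Q \<ge> 2 \<and>
      (\<forall>x \<in> set_pmf p. \<not> Inv x) \<and> \<not> Inv xstar \<and>
      M > 0 \<and>
      (\<forall>t \<in> {0..1}. 0 \<le> L t \<and> L t \<le> M) \<and>
      (\<forall>s \<in> {0..1}. \<forall>t \<in> {0..1}. s \<le> t \<longrightarrow> L t \<le> L s) \<and>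
      convex_on {0..1} L \<and>
      eps1 > 0 \<and> eps2 > 0 \<and>
      real n1 \<ge> C1 * M\<^sup>2 / eps1\<^sup>2 * ln (real (card Q)) \<and>
      real n2 \<ge> C2 * M\<^sup>2 / (eps1\<^sup>2 * eps2\<^sup>2) * ln (real (card Q)) *
                   ln (M * ln (real (card Q)) / (eps1 * eps2))
      \<longrightarrow>
      measure (measure_spmf (alg2 eps1 eps2 alpha n1 n2 M L p Inv xstar Q))
        {r. \<exists>l mu. r = Some (l, mu) \<and> Loss L p mu > l + 2 * eps1 / 3} \<le> 1 / 15"
proof (rule exI[of _ "45 / 2"], rule conjI, simp, rule exI[of _ 1], rule conjI, simp, intro allI impI)
  fix p :: "'a pmf" and Q :: "'a pmf set" and Inv xstar M and L :: "real \<Rightarrow> real"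
    and eps1 eps2 alpha :: real and n1 n2 :: nat
  assume H: "finite Q \<and> card Q \<ge> 2 \<and>
      (\<forall>x \<in> set_pmf p. \<not> Inv x) \<and> \<not> Inv xstar \<and>
      M > 0 \<and>
      (\<forall>t \<in> {0..1}. 0 \<le> L t \<and> L t \<le> M) \<and>
      (\<forall>s \<in> {0..1}. \<forall>t \<in> {0..1}. s \<le> t \<longrightarrow> L t \<le> L s) \<and>
      convex_on {0..1} L \<and>
      eps1 > 0 \<and> eps2 > 0 \<and>
      real n1 \<ge> 45 / 2 * M\<^sup>2 / eps1\<^sup>2 * ln (real (card Q)) \<and>
      real n2 \<ge> 1 * M\<^sup>2 / (eps1\<^sup>2 * eps2\<^sup>2) * ln (real (card Q)) *
                   ln (M * ln (real (card Q)) / (eps1 * eps2))"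
  have finQ: "finite Q" and cQ: "card Q \<ge> 2" and M: "M > 0" and e: "eps1 > 0"
    and Lb: "\<forall>t \<in> {0..1}. 0 \<le> L t \<and> L t \<le> M"
    and mono: "\<forall>s \<in> {0..1}. \<forall>t \<in> {0..1}. s \<le> t \<longrightarrow> L t \<le> L s"
    and cv: "convex_on {0..1} L"
    and n1: "real n1 \<ge> 45 / 2 * M\<^sup>2 / eps1\<^sup>2 * ln (real (card Q))"
    using H by auto
  have cQr: "real (card Q) \<ge> 2" using cQ by simp
  have n1pos: "n1 > 0"
  proof -
    have "ln (real (card Q)) > 0" using cQr by simp
    hence "45 / 2 * M\<^sup>2 / eps1\<^sup>2 * ln (real (card Q)) > 0" using M e by simp
    thus ?thesis using n1 by linarith
  qed
  define emp :: "'a list \<Rightarrow> 'a pmf \<Rightarrow> real" where "emp = (\<lambda>ys q. avg (\<lambda>x. L (pmf q x)) ys)"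
  define NB :: "'a list \<Rightarrow> bool" where "NB = (\<lambda>ys. \<exists>q\<in>Q. Loss L p q > avg (\<lambda>x. L (pmf q x)) ys + eps1 / 3)"
  define Bad where "Bad = {r. \<exists>l mu. r = Some (l, mu) \<and> Loss L p mu > l + 2 * eps1 / 3}"
  have step1: "measure (measure_spmf (alg2 eps1 eps2 alpha n1 n2 M L p Inv xstar Q)) Bad
      \<le> measure (measure_pmf (iid_samples n1 p)) {ys. NB ys}"
    unfolding alg2_def bind_spmf_of_pmf
  proof (rule bind_bad)
    fix ys assume "ys \<in> set_pmf (iid_samples n1 p)" "\<not> NB ys"
    hence c: "\<forall>q\<in>Q. Loss L p q \<le> emp ys q + eps1 / 3" by (auto simp: NB_def emp_def not_less)
    have "set_spmf (alg2_outer eps1 eps2 alpha M n2 Inv xstar Q (emp ys) 0)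
          \<subseteq> insert None (Some ` {(l, mu). Loss L p mu \<le> l + 2 * eps1 / 3})"
      using outer_good[OF finQ M e Lb mono cv c] by blast
    thus "set_spmf (alg2_outer eps1 eps2 alpha M n2 Inv xstar Q (\<lambda>q. avg (\<lambda>x. L (pmf q x)) ys) 0) \<inter> Bad = {}"
      by (auto simp: Bad_def emp_def)
  qed
  have "{ys. NB ys} = (\<Union>q\<in>Q. {ys. Loss L p q > avg (\<lambda>x. L (pmf q x)) ys + eps1 / 3})"
    by (auto simp: NB_def)
  hence "measure (measure_pmf (iid_samples n1 p)) {ys. NB ys}
      \<le> (\<Sum>q\<in>Q. measure (measure_pmf (iid_samples n1 p)) {ys. Loss L p q > avg (\<lambda>x. L (pmf q x)) ys + eps1 / 3})"
    using measure_pmf.finite_measure_subadditive_finite[OF finQ] by simp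
  also have "\<dots> \<le> (\<Sum>q\<in>Q. exp (- 2 * real n1 * (eps1 / 3)\<^sup>2 / M\<^sup>2))"
  proof (intro sum_mono)
    fix q
    show "measure (measure_pmf (iid_samples n1 p)) {ys. Loss L p q > avg (\<lambda>x. L (pmf q x)) ys + eps1 / 3}
          \<le> exp (- 2 * real n1 * (eps1 / 3)\<^sup>2 / M\<^sup>2)"
      unfolding Loss_def by (rule bad_q[OF n1pos M]) (use e Lb in \<open>auto simp: pmf_le_1\<close>)
  qed
  also have "\<dots> = real (card Q) * exp (- 2 * real n1 * (eps1 / 3)\<^sup>2 / M\<^sup>2)" by simp
  also have "\<dots> \<le> 1 / 15" by (rule final_arith[OF cQr M e n1])
  finally have X: "measure (measure_spmf (alg2 eps1 eps2 alpha n1 n2 M L p Inv xstar Q))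
        {r. \<exists>l mu. r = Some (l, mu) \<and> Loss L p mu > l + 2 * eps1 / 3} \<le> 1 / 15"
    using step1 by (simp add: Bad_def)
  show "measure (measure_spmf (alg2 eps1 eps2 alpha n1 n2 M L p Inv xstar Q))
        {r. \<exists>l mu. r = Some (l, mu) \<and> Loss L p mu > l + 2 * eps1 / 3} \<le> 1 / 15" using X by simp
qed

end
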